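(* Let $\lvert\psi\rangle$ be an $n$-qubit state. Suppose the fidelity $\lvert\langle\psi|\phi\rangle\rvert^2$ is maximized by $\lvert\phi\rangle = \lvert0^n\rangle$ over stabilizer states $\lvert\phi\rangle$. Let $S^* = 0^n \times \mathbb F_2^n = \mathrm{Weyl}(\lvert0^n\rangle)$, and let $T = 0^{n + 1} \times \mathbb F_2^{n - 1}$ be a maximal subspace of $S^*$. Then \[\sum_{x \in S^* \setminus T} c_\psi(x) \geq 2^{\frac{n}{2}-1} \left(\sqrt{3}-1\right) F_\mathcal{S}(\lvert\psi\rangle).\]
   Context: For $x=(a,b)\in\mathbb F_2^{2n}$ the Weyl operator is $W_x = i^{a\cdot b}X^{a_1}Z^{b_1}\otimes\cdots\otimes X^{a_n}Z^{b_n}$; $c_\psi(x)=2^{-n/2}\langle\psi|W_x|\psi\rangle$ (the coefficients in the Weyl expansion $\lvert\psi\rangle\langle\psi\rvert=2^{-n/2}\sum_x c_\psi(x)W_x$); $\mathrm{Weyl}(\lvert\phi\rangle)=\{x: W_x\lvert\phi\rangle=\pm\lvert\phi\rangle\}$; $F_\mathcal{S}(\lvert\psi\rangle)=\max_{\lvert\phi\rangle\text{ stabilizer}}\lvert\langle\phi|\psi\rangle\rvert^2$. *)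

theory Defs
  imports Complex_Main
begin

text \<open>Qubits are indexed 0,...,n-1. A vector in F_2^n is encoded as a
subset of {..<n} (its support); addition is symmetric difference and the dot
product of a and b is card (a \<inter> b). An n-qubit vector is a function
nat set \<Rightarrow> complex, the computational basis state |y> being indexed by
y \<subseteq> {..<n}; only the values on Pow {..<n} matter.\<close>

type_synonym qstate = "nat set \<Rightarrow> complex"

definition sdiff :: "nat set \<Rightarrow> nat set \<Rightarrow> nat set" where
  "sdiff a b = (a - b) \<union> (b - a)"

definition inner_q :: "nat \<Rightarrow> qstate \<Rightarrow> qstate \<Rightarrow> complex" where
  "inner_q n phi psi = (\<Sum>y\<in>Pow {..<n}. cnj (phi y) * psi y)"

definition is_qstate :: "nat \<Rightarrow> qstate \<Rightarrow> bool" where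
  "is_qstate n psi \<longleftrightarrow> (\<Sum>y\<in>Pow {..<n}. (cmod (psi y))\<^sup>2) = 1"

text \<open>Weyl operator W_(a,b) = i^(a.b) X^(a_1) Z^(b_1) (x) ... (x) X^(a_n) Z^(b_n):
X^a Z^b |y> = (-1)^(b.y) |y + a>.\<close>
definition weyl_op :: "nat set \<times> nat set \<Rightarrow> qstate \<Rightarrow> qstate" where
  "weyl_op x psi = (\<lambda>z. \<i> ^ card (fst x \<inter> snd x) *
      (-1) ^ card (snd x \<inter> sdiff z (fst x)) * psi (sdiff z (fst x)))"

definition c_coef :: "nat \<Rightarrow> qstate \<Rightarrow> nat set \<times> nat set \<Rightarrow> real" where
  "c_coef n psi x = Re (inner_q n psi (weyl_op x psi)) / sqrt (2 ^ n)"

definition zero_state :: qstate where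
  "zero_state = (\<lambda>z. if z = {} then 1 else 0)"

definition hadamard :: "nat \<Rightarrow> qstate \<Rightarrow> qstate" where
  "hadamard j psi = (\<lambda>z. (psi (z - {j}) + (if j \<in> z then -1 else 1) * psi (z \<union> {j}))
                          / complex_of_real (sqrt 2))"

definition phase_gate :: "nat \<Rightarrow> qstate \<Rightarrow> qstate" where
  "phase_gate j psi = (\<lambda>z. (if j \<in> z then \<i> else 1) * psi z)"

definition cnot :: "nat \<Rightarrow> nat \<Rightarrow> qstate \<Rightarrow> qstate" where
  "cnot j k psi = (\<lambda>z. psi (if j \<in> z then sdiff z {k} else z))"

inductive_set stab_states :: "nat \<Rightarrow> qstate set" for n :: nat where
  zero: "zero_state \<in> stab_states n"
| had: "phi \<in> stab_states n \<Longrightarrow> j < n \<Longrightarrow> hadamard j phi \<in> stab_states n"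
| ph: "phi \<in> stab_states n \<Longrightarrow> j < n \<Longrightarrow> phase_gate j phi \<in> stab_states n"
| cx: "phi \<in> stab_states n \<Longrightarrow> j < n \<Longrightarrow> k < n \<Longrightarrow> j \<noteq> k \<Longrightarrow> cnot j k phi \<in> stab_states n"
| glob: "phi \<in> stab_states n \<Longrightarrow> cmod c = 1 \<Longrightarrow> (\<lambda>z. c * phi z) \<in> stab_states n"

definition stab_fidelity :: "nat \<Rightarrow> qstate \<Rightarrow> real" where
  "stab_fidelity n psi = (SUP phi\<in>stab_states n. (cmod (inner_q n phi psi))\<^sup>2)"

definition weyl_set :: "nat \<Rightarrow> qstate \<Rightarrow> (nat set \<times> nat set) set" where
  "weyl_set n phi = {x. fst x \<subseteq> {..<n} \<and> snd x \<subseteq> {..<n} \<and>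
     ((\<forall>z\<in>Pow {..<n}. weyl_op x phi z = phi z) \<or> (\<forall>z\<in>Pow {..<n}. weyl_op x phi z = - phi z))}"

end

theory Submission
  imports Defs
begin

lemma char_sum:
  assumes "finite S"
  shows "(\<Sum>b\<in>Pow S. (-1::real) ^ card (b \<inter> y)) = (if S \<inter> y = {} then 2 ^ card S else 0)"
  using assms
proof (induction S rule: finite_induct)
  case empty
  then show ?case by simp
next
  case (insert a S)
  have fin: "finite (Pow S)" using insert by simp
  have disj: "Pow S \<inter> insert a ` Pow S = {}" using insert by auto
  have inj: "inj_on (insert a) (Pow S)" unfolding inj_on_def by (metis PowD insert_ident subsetD insert.hyps(2))
  have c: "card (insert a b \<inter> y) = card (b \<inter> y) + (if a \<in> y then 1 else 0)" if "b \<in> Pow S" for b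
  proof -
    have "finite b" using that insert finite_subset by auto
    moreover have "a \<notin> b" using that insert by auto
    ultimately show ?thesis
      by (cases "a \<in> y") (auto simp: Int_insert_left)
  qed
  have "(\<Sum>b\<in>Pow (insert a S). (-1::real) ^ card (b \<inter> y))
      = (\<Sum>b\<in>Pow S. (-1::real) ^ card (b \<inter> y)) + (\<Sum>b\<in>insert a ` Pow S. (-1::real) ^ card (b \<inter> y))"
    unfolding Pow_insert using fin disj by (simp add: sum.union_disjoint)
  also have "(\<Sum>b\<in>insert a ` Pow S. (-1::real) ^ card (b \<inter> y)) = (\<Sum>b\<in>Pow S. (-1::real) ^ card (insert a b \<inter> y))"
    using inj by (simp add: sum.reindex)
  also have "\<dots> = (if a \<in> y then -1 else 1) * (\<Sum>b\<in>Pow S. (-1::real) ^ card (b \<inter> y))"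
    by (simp only: sum_distrib_left) (rule sum.cong, rule refl, simp only: c power_add, simp)
  finally show ?case using insert by (auto simp: card_insert_if)
qed

lemma sum_two:
  fixes f :: "nat set \<Rightarrow> 'a::comm_monoid_add"
  assumes "n \<ge> 1" and "\<And>y. y \<subseteq> {..<n} \<Longrightarrow> y \<noteq> {} \<Longrightarrow> y \<noteq> {0} \<Longrightarrow> f y = 0"
  shows "(\<Sum>y\<in>Pow {..<n}. f y) = f {} + f {0}"
proof -
  have "(\<Sum>y\<in>Pow {..<n}. f y) = (\<Sum>y\<in>{{},{0}}. f y)"
    by (rule sum.mono_neutral_cong_right) (use assms in auto)
  also have "\<dots> = f {} + f {0}" by simp
  finally show ?thesis .
qed

lemma c_coef_Z:
  "c_coef n psi ({}, b) = (\<Sum>y\<in>Pow {..<n}. (-1) ^ card (b \<inter> y) * (cmod (psi y))\<^sup>2) / sqrt (2 ^ n)"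
proof -
  have w: "weyl_op ({}, b) psi = (\<lambda>z. (-1) ^ card (b \<inter> z) * psi z)"
    unfolding weyl_op_def sdiff_def by simp
  have e: "cnj (psi y) * psi y = of_real ((cmod (psi y))\<^sup>2)" for y
    by (metis complex_norm_square mult.commute)
  have r: "Re (cnj (psi y) * ((-1) ^ card (b \<inter> y) * psi y)) = (-1) ^ card (b \<inter> y) * (cmod (psi y))\<^sup>2" for y
  proof -
    have "cnj (psi y) * ((-1) ^ card (b \<inter> y) * psi y) = of_real ((-1) ^ card (b \<inter> y) * (cmod (psi y))\<^sup>2)"
      by (simp only: mult.left_commute[of "cnj (psi y)"] e of_real_mult of_real_power of_real_minus of_real_1)
    then show ?thesis by (simp only: Re_complex_of_real)
  qed
  show ?thesis
    unfolding c_coef_def inner_q_def w Re_sum r ..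
qed

lemma index_set:
  fixes n :: nat
  assumes "n \<ge> 1"
  shows "{({}, b) | b. b \<subseteq> {..<n}} - {({}, b) | b. b \<subseteq> {1..<n}} = (\<lambda>b. ({}, insert 0 b)) ` Pow {1..<n}"
proof (rule set_eqI, rule iffI)
  fix x assume "x \<in> {({}, b) | b. b \<subseteq> {..<n}} - {({}, b) | b. b \<subseteq> {1..<n}}"
  then obtain b where x: "x = ({}, b)" "b \<subseteq> {..<n}" "\<not> b \<subseteq> {1..<n}" by blast
  have "0 \<in> b" proof (rule ccontr)
    assume "0 \<notin> b"
    have "b \<subseteq> {1..<n}"
    proof
      fix t assume t: "t \<in> b"
      then have "t \<noteq> 0" using \<open>0 \<notin> b\<close> by metis
      moreover have "t < n" using t x(2) by blast
      ultimately show "t \<in> {1..<n}" by simp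
    qed
    then show False using x(3) by blast
  qed
  moreover have "b - {0} \<subseteq> {1..<n}" using x by auto
  ultimately show "x \<in> (\<lambda>b. ({}, insert 0 b)) ` Pow {1..<n}" using x
    by (metis PowI image_eqI insert_Diff)
next
  fix x assume "x \<in> (\<lambda>b. ({}, insert 0 b)) ` Pow {1..<n}"
  then obtain b where "x = ({}, insert 0 b)" "b \<subseteq> {1..<n}" by blast
  then show "x \<in> {({}, b) | b. b \<subseteq> {..<n}} - {({}, b) | b. b \<subseteq> {1..<n}}"
    using assms by auto
qed

lemma lhs_value:
  assumes "n \<ge> 1"
  shows "(\<Sum>x\<in>{({}, b) | b. b \<subseteq> {..<n}} - {({}, b) | b. b \<subseteq> {1..<n}}. c_coef n psi x)
     = 2 ^ (n - 1) * ((cmod (psi {}))\<^sup>2 - (cmod (psi {0}))\<^sup>2) / sqrt (2 ^ n)"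
proof -
  let ?p = "\<lambda>y. (cmod (psi y))\<^sup>2"
  have inj: "inj_on (\<lambda>b. ({}::nat set, insert (0::nat) b)) (Pow {1..<n})"
    unfolding inj_on_def by (metis PowD Pair_inject atLeastLessThan_iff insert_ident not_one_le_zero subsetD)
  have card: "card (insert 0 b \<inter> y) = card (b \<inter> y) + (if 0 \<in> y then 1 else 0)"
    if "b \<in> Pow {1..<n}" for b y
  proof -
    have "finite b" using that finite_subset by auto
    moreover have "0 \<notin> b" using that by auto
    ultimately show ?thesis
      by (cases "0 \<in> y") (auto simp: Int_insert_left)
  qed
  have inner: "(\<Sum>b\<in>Pow {1..<n}. (-1::real) ^ card (insert 0 b \<inter> y))
      = (if 0 \<in> y then -1 else 1) * (if {1..<n} \<inter> y = {} then 2 ^ (n - 1) else 0)" for y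
  proof -
    have "(\<Sum>b\<in>Pow {1..<n}. (-1::real) ^ card (insert 0 b \<inter> y))
        = (\<Sum>b\<in>Pow {1..<n}. (if 0 \<in> y then -1 else 1) * (-1::real) ^ card (b \<inter> y))"
      by (rule sum.cong, rule refl, simp only: card power_add, simp)
    also have "\<dots> = (if 0 \<in> y then -1 else 1) * (\<Sum>b\<in>Pow {1..<n}. (-1::real) ^ card (b \<inter> y))"
      by (simp only: sum_distrib_left)
    also have "\<dots> = (if 0 \<in> y then -1 else 1) * (if {1..<n} \<inter> y = {} then 2 ^ (n - 1) else 0)"
      by (simp only: char_sum[of "{1..<n}" y] finite_atLeastLessThan card_atLeastLessThan)
    finally show ?thesis .
  qed
  have "(\<Sum>x\<in>{({}, b) | b. b \<subseteq> {..<n}} - {({}, b) | b. b \<subseteq> {1..<n}}. c_coef n psi x)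
      = (\<Sum>b\<in>Pow {1..<n}. c_coef n psi ({}, insert 0 b))"
    unfolding index_set[OF assms] using inj by (simp add: sum.reindex)
  also have "\<dots> = (\<Sum>b\<in>Pow {1..<n}. \<Sum>y\<in>Pow {..<n}. (-1) ^ card (insert 0 b \<inter> y) * ?p y) / sqrt (2 ^ n)"
    by (simp only: c_coef_Z sum_divide_distrib)
  also have "(\<Sum>b\<in>Pow {1..<n}. \<Sum>y\<in>Pow {..<n}. (-1) ^ card (insert 0 b \<inter> y) * ?p y)
      = (\<Sum>y\<in>Pow {..<n}. ?p y * (\<Sum>b\<in>Pow {1..<n}. (-1::real) ^ card (insert 0 b \<inter> y)))"
    by (subst sum.swap) (simp add: sum_distrib_left mult.commute)
  also have "\<dots> = (\<Sum>y\<in>Pow {..<n}. ?p y * ((if 0 \<in> y then -1 else 1) * (if {1..<n} \<inter> y = {} then 2 ^ (n - 1) else 0)))"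
    by (simp only: inner)
  also have "\<dots> = ?p {} * 2 ^ (n - 1) - ?p {0} * 2 ^ (n - 1)"
  proof (subst sum_two[OF assms])
    fix y assume y: "y \<subseteq> {..<n}" "y \<noteq> {}" "y \<noteq> {0}"
    then obtain k where "k \<in> y" "k \<noteq> 0" by auto
    then have "k \<in> {1..<n} \<inter> y" using y by auto
    then have "{1..<n} \<inter> y \<noteq> {}" by blast
    then show "?p y * ((if 0 \<in> y then -1 else 1) * (if {1..<n} \<inter> y = {} then 2 ^ (n - 1) else 0)) = 0" by simp
  next
    show "?p {} * ((if 0 \<in> {} then -1 else 1) * (if {1..<n} \<inter> {} = {} then 2 ^ (n - 1) else 0)) +
      ?p {0} * ((if 0 \<in> {0} then -1 else 1) * (if {1..<n} \<inter> {0} = {} then 2 ^ (n - 1) else 0))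
      = ?p {} * 2 ^ (n - 1) - ?p {0} * 2 ^ (n - 1)" by simp
  qed
  finally show ?thesis by (simp add: algebra_simps)
qed

lemma real_alg:
  fixes P Q u v :: real
  assumes "Q \<ge> 0" "Q + 2 * u \<le> P" "Q - 2 * u \<le> P" "Q + 2 * v \<le> P" "Q - 2 * v \<le> P"
    and "u^2 + v^2 = P * Q"
  shows "Q \<le> (2 - sqrt 3) * P"
proof (rule ccontr)
  assume neg: "\<not> ?thesis"
  have s3: "sqrt 3 * sqrt 3 = (3::real)" by simp
  have s3p: "sqrt 3 > (0::real)" by simp
  have PQ: "P - Q \<ge> 2 * \<bar>u\<bar>" "P - Q \<ge> 2 * \<bar>v\<bar>" using assms by auto
  have "(P - Q)^2 \<ge> (2 * \<bar>u\<bar>)^2" by (rule power_mono[OF PQ(1)]) simp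
  moreover have "(P - Q)^2 \<ge> (2 * \<bar>v\<bar>)^2" by (rule power_mono[OF PQ(2)]) simp
  ultimately have "2 * (P - Q)^2 \<ge> 4 * (u^2 + v^2)" by (simp add: power_mult_distrib)
  then have key: "P^2 - 4 * P * Q + Q^2 \<ge> 0" using assms(6) by (simp add: power2_eq_square algebra_simps)
  have fac: "(Q - (2 - sqrt 3) * P) * (Q - (2 + sqrt 3) * P) = P^2 - 4 * P * Q + Q^2"
    using s3 by (simp add: power2_eq_square algebra_simps)
  have P0: "P > 0"
  proof (rule ccontr)
    assume "\<not> P > 0"
    then have "P \<le> 0" by simp
    then have "Q \<le> 0" using PQ by linarith
    then have "Q = 0" using assms(1) by simp
    have "sqrt 3 < sqrt (4::real)" by (subst real_sqrt_less_iff) simp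
    then have "2 - sqrt 3 > (0::real)" by simp
    then have "(2 - sqrt 3) * P \<le> 0" using \<open>P \<le> 0\<close> by (simp add: mult_nonneg_nonpos)
    have "P = 0" using \<open>P \<le> 0\<close> \<open>Q = 0\<close> PQ by linarith
    then show False using neg \<open>Q = 0\<close> by simp
  qed
  have a: "Q - (2 - sqrt 3) * P > 0" using neg by simp
  have "Q \<le> P" using PQ by linarith
  then have b: "Q - (2 + sqrt 3) * P < 0" proof -
    have "sqrt 3 * P > 0" using P0 s3p by simp
    moreover have "Q - (2 + sqrt 3) * P = (Q - P) - P - sqrt 3 * P" by (simp add: algebra_simps)
    ultimately show ?thesis using \<open>Q \<le> P\<close> P0 by linarith
  qed
  have "(Q - (2 - sqrt 3) * P) * (Q - (2 + sqrt 3) * P) < 0" using a b by (simp add: mult_pos_neg)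
  then show False using fac key by simp
qed

lemma cplx_alg:
  fixes a b :: complex
  assumes "(cmod (a + b))^2 \<le> 2 * (cmod a)^2" "(cmod (a - b))^2 \<le> 2 * (cmod a)^2"
    "(cmod (a + \<i> * b))^2 \<le> 2 * (cmod a)^2" "(cmod (a - \<i> * b))^2 \<le> 2 * (cmod a)^2"
  shows "(cmod b)^2 \<le> (2 - sqrt 3) * (cmod a)^2"
proof (rule real_alg[where u = "Re a * Re b + Im a * Im b" and v = "Re a * Im b - Im a * Re b"])
  show "(cmod b)^2 \<ge> 0" by simp
  show "(cmod b)\<^sup>2 + 2 * (Re a * Re b + Im a * Im b) \<le> (cmod a)\<^sup>2"
    using assms(1) unfolding cmod_power2 by (simp add:  power2_eq_square algebra_simps)
  show "(cmod b)\<^sup>2 - 2 * (Re a * Re b + Im a * Im b) \<le> (cmod a)\<^sup>2"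
    using assms(2) unfolding cmod_power2 by (simp add:  power2_eq_square algebra_simps)
  show "(cmod b)\<^sup>2 + 2 * (Re a * Im b - Im a * Re b) \<le> (cmod a)\<^sup>2"
    using assms(4) unfolding cmod_power2 by (simp add:  power2_eq_square algebra_simps)
  show "(cmod b)\<^sup>2 - 2 * (Re a * Im b - Im a * Re b) \<le> (cmod a)\<^sup>2"
    using assms(3) unfolding cmod_power2 by (simp add:  power2_eq_square algebra_simps)
  show "(Re a * Re b + Im a * Im b)\<^sup>2 + (Re a * Im b - Im a * Re b)\<^sup>2 = (cmod a)\<^sup>2 * (cmod b)\<^sup>2"
    unfolding cmod_power2 by (simp add: power2_eq_square algebra_simps)
qed


definition st2 :: "complex \<Rightarrow> complex \<Rightarrow> qstate" where
  "st2 c d = (\<lambda>z. if z = {} then c else if z = {0} then d else 0)"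

lemma H0_eq: "hadamard 0 zero_state = st2 (1 / complex_of_real (sqrt 2)) (1 / complex_of_real (sqrt 2))"
proof
  fix z :: "nat set"
  have "z \<union> {0} \<noteq> {}" by simp
  moreover have "(z - {0} = {}) \<longleftrightarrow> (z = {} \<or> z = {0})" by auto
  ultimately show "hadamard 0 zero_state z = st2 (1 / complex_of_real (sqrt 2)) (1 / complex_of_real (sqrt 2)) z"
    unfolding hadamard_def zero_state_def st2_def by auto
qed

lemma phase_st2: "phase_gate 0 (st2 c d) = st2 c (\<i> * d)"
  unfolding phase_gate_def st2_def by auto

lemma inner_st2:
  assumes "n \<ge> 1"
  shows "inner_q n (st2 c d) psi = cnj c * psi {} + cnj d * psi {0}"
  unfolding inner_q_def by (subst sum_two[OF assms]) (auto simp: st2_def)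

lemma inner_zero:
  assumes "n \<ge> 1"
  shows "inner_q n zero_state psi = psi {}"
  unfolding inner_q_def by (subst sum_two[OF assms]) (auto simp: zero_state_def)

lemma fid_bound:
  assumes "n \<ge> 1"
    and "\<forall>phi\<in>stab_states n. (cmod (inner_q n phi psi))\<^sup>2 \<le> (cmod (inner_q n zero_state psi))\<^sup>2"
  shows "(cmod (psi {0}))\<^sup>2 \<le> (2 - sqrt 3) * (cmod (psi {}))\<^sup>2"
proof -
  let ?c = "1 / complex_of_real (sqrt 2)"
  let ?a = "psi {}" and ?b = "psi {0}"
  have n0: "0 < n" using assms by simp
  have H: "st2 ?c ?c \<in> stab_states n"
    using stab_states.had[OF stab_states.zero n0] H0_eq by simp
  have P: "st2 c (\<i> * d) \<in> stab_states n" if "st2 c d \<in> stab_states n" for c d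
    using stab_states.ph[OF that n0] phase_st2 by simp
  have H1: "st2 ?c (\<i> * ?c) \<in> stab_states n" using P[OF H] .
  have H2: "st2 ?c (\<i> * (\<i> * ?c)) \<in> stab_states n" using P[OF H1] .
  have H3: "st2 ?c (\<i> * (\<i> * (\<i> * ?c))) \<in> stab_states n" using P[OF H2] .
  have cc: "cnj ?c = ?c" by simp
  have gen: "(cmod (?a + w * ?b))\<^sup>2 \<le> 2 * (cmod ?a)\<^sup>2" if "st2 ?c d \<in> stab_states n" "cnj d = ?c * w" for d w
  proof -
    have A: "(cmod (inner_q n (st2 ?c d) psi))\<^sup>2 \<le> (cmod ?a)\<^sup>2"
      using assms(2) that(1) inner_zero[OF assms(1)] by metis
    have B: "inner_q n (st2 ?c d) psi = ?c * (?a + w * ?b)"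
      using inner_st2[OF assms(1)] that(2) cc by (simp add: algebra_simps)
    have C: "(cmod (?c * (?a + w * ?b)))\<^sup>2 = (cmod (?a + w * ?b))\<^sup>2 / 2"
      by (simp add: norm_mult norm_divide power_mult_distrib power_divide)
    have "(cmod (?a + w * ?b))\<^sup>2 / 2 \<le> (cmod ?a)\<^sup>2" using A unfolding B C .
    then show ?thesis by simp
  qed
  have g1: "(cmod (?a + ?b))\<^sup>2 \<le> 2 * (cmod ?a)\<^sup>2" using gen[OF H, of 1] by simp
  have g2: "(cmod (?a - \<i> * ?b))\<^sup>2 \<le> 2 * (cmod ?a)\<^sup>2" using gen[OF H1, of "- \<i>"] by simp
  have g3: "(cmod (?a - ?b))\<^sup>2 \<le> 2 * (cmod ?a)\<^sup>2" using gen[OF H2, of "- 1"] by simp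
  have g4: "(cmod (?a + \<i> * ?b))\<^sup>2 \<le> 2 * (cmod ?a)\<^sup>2" using gen[OF H3, of "\<i>"] by simp
  show ?thesis using cplx_alg[OF g1 g3 g4 g2] .
qed

lemma fid_eq:
  assumes "n \<ge> 1"
    and "\<forall>phi\<in>stab_states n. (cmod (inner_q n phi psi))\<^sup>2 \<le> (cmod (inner_q n zero_state psi))\<^sup>2"
  shows "stab_fidelity n psi = (cmod (psi {}))\<^sup>2"
  unfolding stab_fidelity_def
proof (rule cSup_eq_maximum)
  have z: "(cmod (inner_q n zero_state psi))\<^sup>2 = (cmod (psi {}))\<^sup>2"
    by (simp only: inner_zero[OF assms(1)])
  show "(cmod (psi {}))\<^sup>2 \<in> (\<lambda>phi. (cmod (inner_q n phi psi))\<^sup>2) ` stab_states n"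
    by (rule image_eqI[where x = zero_state and f = "\<lambda>phi. (cmod (inner_q n phi psi))\<^sup>2"])
      (rule z[symmetric], rule stab_states.zero)
  fix x assume "x \<in> (\<lambda>phi. (cmod (inner_q n phi psi))\<^sup>2) ` stab_states n"
  then obtain phi where "phi \<in> stab_states n" "x = (cmod (inner_q n phi psi))\<^sup>2" by (rule imageE)
  then show "x \<le> (cmod (psi {}))\<^sup>2" using assms(2) z by simp
qed

lemma powr_fact:
  assumes "n \<ge> 1"
  shows "2 powr (real n / 2 - 1) = 2 ^ (n - 1) / sqrt (2 ^ n)"
proof -
  have "sqrt (2 ^ n) = (2 powr (real n)) powr (1/2)"
    by (simp add: powr_half_sqrt powr_realpow)
  also have "\<dots> = 2 powr (real n / 2)" by (simp add: powr_powr)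
  finally have s: "sqrt (2 ^ n) = 2 powr (real n / 2)" .
  have p: "(2::real) ^ (n - 1) = 2 powr (real n - 1)"
    using assms by (simp add: powr_realpow[symmetric] of_nat_diff)
  show ?thesis unfolding s p by (simp add: powr_diff[symmetric])
qed

theorem lemma5p4:
  fixes n :: nat and psi :: qstate
  assumes "n \<ge> 1"
    and "is_qstate n psi"
    and "\<forall>phi\<in>stab_states n. (cmod (inner_q n phi psi))\<^sup>2 \<le> (cmod (inner_q n zero_state psi))\<^sup>2"
  shows "(\<Sum>x\<in>{({}, b) | b. b \<subseteq> {..<n}} - {({}, b) | b. b \<subseteq> {1..<n}}. c_coef n psi x)
           \<ge> 2 powr (real n / 2 - 1) * (sqrt 3 - 1) * stab_fidelity n psi"
proof -
  let ?K = "2 ^ (n - 1) / sqrt (2 ^ n) :: real"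
  have K: "?K > 0" by simp
  have fb: "(cmod (psi {0}))\<^sup>2 \<le> (2 - sqrt 3) * (cmod (psi {}))\<^sup>2"
    using fid_bound[OF assms(1) assms(3)] .
  have I: "?K * ((sqrt 3 - 1) * (cmod (psi {}))\<^sup>2) \<le> ?K * ((cmod (psi {}))\<^sup>2 - (cmod (psi {0}))\<^sup>2)"
    using fb K by (intro mult_left_mono) (auto simp: algebra_simps)
  have L: "(\<Sum>x\<in>{({}, b) | b. b \<subseteq> {..<n}} - {({}, b) | b. b \<subseteq> {1..<n}}. c_coef n psi x)
     = ?K * ((cmod (psi {}))\<^sup>2 - (cmod (psi {0}))\<^sup>2)"
    unfolding lhs_value[OF assms(1)] by (rule times_divide_eq_left[symmetric])
  have R: "2 powr (real n / 2 - 1) * (sqrt 3 - 1) * stab_fidelity n psi = ?K * ((sqrt 3 - 1) * (cmod (psi {}))\<^sup>2)"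
    unfolding fid_eq[OF assms(1) assms(3)] powr_fact[OF assms(1)] by (rule mult.assoc)
  show ?thesis unfolding L R using I .
qed

end
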